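(* Let $X$ be a finite nonempty set, $Y$ a nonempty compact metric space, and $u: X\times Y\to\mathbb{R}$ such that $y\mapsto u(x,y)$ is continuous for each $x\in X$. Then for every $\alpha>0$ there exists a bounded measurable function $\hat u: X\times Y\to\mathbb{R}$ such that the game $\hat{\mathcal{G}} = \langle X, Y, \hat u\rangle$ is essentially finite and is an $\alpha$-approximation of $\mathcal{G}=\langle X,Y,u\rangle$, i.e. $|u(x,y)-\hat u(x,y)|\le \alpha$ for all $(x,y)\in X\times Y$.
   Context: A game $\langle X, Y, v\rangle$ is essentially finite if there exist a finite game $\langle \hat X, \hat Y, w\rangle$ (with $\hat X,\hat Y$ finite sets) and measurable maps $f_1: X\to\hat X$, $f_2: Y\to\hat Y$ such that $v(x,y) = w(f_1(x), f_2(y))$ for all $(x,y)\in X\times Y$. A game $\langle X,Y,v'\rangle$ with bounded measurable utility is an $\alpha$-approximation of $\langle X,Y,v\rangle$ if $|v(x,y)-v'(x,y)|\le\alpha$ for all $(x,y)$. *)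

theory Defs
  imports "HOL-Analysis.Analysis"
begin

text \<open>A game on strategy spaces MX, MY (measurable spaces) with utility v.
  Finite strategy sets of the reduced game are taken as finite sets of naturals
  (every finite set is in bijection with one).\<close>

definition essentially_finite ::
  "'a measure \<Rightarrow> 'b measure \<Rightarrow> ('a \<Rightarrow> 'b \<Rightarrow> real) \<Rightarrow> bool" where
  "essentially_finite MX MY v \<longleftrightarrow>
     (\<exists>(Xh :: nat set) (Yh :: nat set) (w :: nat \<Rightarrow> nat \<Rightarrow> real) f1 f2.
        finite Xh \<and> finite Yh \<and>
        f1 \<in> MX \<rightarrow>\<^sub>M count_space Xh \<and> f2 \<in> MY \<rightarrow>\<^sub>M count_space Yh \<and>
        (\<forall>x\<in>space MX. \<forall>y\<in>space MY. v x y = w (f1 x) (f2 y)))"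

definition alpha_approximation ::
  "real \<Rightarrow> 'a set \<Rightarrow> 'b set \<Rightarrow> ('a \<Rightarrow> 'b \<Rightarrow> real) \<Rightarrow> ('a \<Rightarrow> 'b \<Rightarrow> real) \<Rightarrow> bool" where
  "alpha_approximation \<alpha> X Y v' v \<longleftrightarrow> (\<forall>x\<in>X. \<forall>y\<in>Y. \<bar>v x y - v' x y\<bar> \<le> \<alpha>)"

end

theory Submission
  imports Defs
begin

lemma f2_meas:
  fixes cs :: "'b::metric_space list" and d :: real
  defines "f2 \<equiv> \<lambda>y. (LEAST i. i = length cs \<or> y \<in> ball (cs!i) d)"
  shows "f2 \<in> restrict_space borel Y \<rightarrow>\<^sub>M count_space {..length cs}"
proof -
  let ?n = "length cs"
  have key: "f2 y = a \<longleftrightarrow> (a = ?n \<or> y \<in> ball (cs!a) d) \<and> (\<forall>j<a. j \<noteq> ?n \<and> y \<notin> ball (cs!j) d)" for y a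
  proof
    assume "f2 y = a"
    then show "(a = ?n \<or> y \<in> ball (cs!a) d) \<and> (\<forall>j<a. j \<noteq> ?n \<and> y \<notin> ball (cs!j) d)"
    proof -
      have L: "?n = ?n \<or> y \<in> ball (cs!?n) d" by simp
      have 1: "a = ?n \<or> y \<in> ball (cs!a) d"
        using LeastI[of "\<lambda>i. i = ?n \<or> y \<in> ball (cs!i) d", OF L] \<open>f2 y = a\<close> unfolding f2_def by simp
      have 2: "\<not> (j = ?n \<or> y \<in> ball (cs!j) d)" if "j < a" for j
        using not_less_Least[of j "\<lambda>i. i = ?n \<or> y \<in> ball (cs!i) d"] that \<open>f2 y = a\<close> unfolding f2_def by simp
      show ?thesis using 1 2 by blast
    qed
  next
    assume "(a = ?n \<or> y \<in> ball (cs!a) d) \<and> (\<forall>j<a. j \<noteq> ?n \<and> y \<notin> ball (cs!j) d)"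
    then show "f2 y = a" unfolding f2_def
      by (intro Least_equality) (auto simp: not_less[symmetric])
  qed
  have le: "f2 y \<le> ?n" for y unfolding f2_def by (rule Least_le) simp
  have S: "f2 -` {a} = (if a \<le> ?n then (if a = ?n then UNIV else ball (cs!a) d) \<inter> (- (\<Union>j\<in>{..<a}. ball (cs!j) d)) else {})" for a
    by (rule set_eqI, unfold vimage_singleton_eq key) (cases "a < length cs"; cases "a = length cs"; force)
  have B: "f2 -` {a} \<in> sets borel" for a
    proof -
    have c: "(- (\<Union>j\<in>{..<a}. ball (cs!j) d)) \<in> sets borel"
      by (intro borel_closed closed_Compl open_UN) auto
    have o: "(if a = ?n then UNIV else ball (cs!a) d) \<in> sets borel" by auto
    show ?thesis unfolding S using c o by (auto intro: sets.Int)
  qed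
  show ?thesis
    unfolding measurable_count_space_eq2_countable
  proof
    show "f2 \<in> space (restrict_space borel Y) \<rightarrow> {..?n}" using le by auto
    show "\<forall>a\<in>{..?n}. f2 -` {a} \<inter> space (restrict_space borel Y) \<in> sets (restrict_space borel Y)"
      using B by (auto simp: sets_restrict_space space_restrict_space)
  qed
qed

theorem proposition4:
  fixes X :: "'a set" and Y :: "'b::metric_space set" and u :: "'a \<Rightarrow> 'b \<Rightarrow> real"
    and \<alpha> :: real
  assumes "finite X" and "X \<noteq> {}"
    and "compact Y" and "Y \<noteq> {}"
    and "\<forall>x\<in>X. continuous_on Y (u x)"
    and "\<alpha> > 0"
  shows "\<exists>uh :: 'a \<Rightarrow> 'b \<Rightarrow> real.
           (\<lambda>(x, y). uh x y) \<in> borel_measurable (count_space X \<Otimes>\<^sub>M restrict_space borel Y) \<and>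
           (\<exists>B. \<forall>x\<in>X. \<forall>y\<in>Y. \<bar>uh x y\<bar> \<le> B) \<and>
           essentially_finite (count_space X) (restrict_space borel Y) uh \<and>
           alpha_approximation \<alpha> X Y uh u"
proof -
  have "\<forall>x\<in>X. \<exists>e>0. \<forall>y\<in>Y. \<forall>y'\<in>Y. dist y' y < e \<longrightarrow> dist (u x y') (u x y) < \<alpha>"
  proof
    fix x assume "x \<in> X"
    then have "uniformly_continuous_on Y (u x)"
      using assms by (intro compact_uniformly_continuous) auto
    then show "\<exists>e>0. \<forall>y\<in>Y. \<forall>y'\<in>Y. dist y' y < e \<longrightarrow> dist (u x y') (u x y) < \<alpha>"
      unfolding uniformly_continuous_on_def using assms(6) by blast
  qed
  then obtain e where e: "\<And>x. x \<in> X \<Longrightarrow> e x > 0"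
    "\<And>x y y'. x \<in> X \<Longrightarrow> y \<in> Y \<Longrightarrow> y' \<in> Y \<Longrightarrow> dist y' y < e x \<Longrightarrow> dist (u x y') (u x y) < \<alpha>"
    by metis
  define d where "d = Min (e ` X)"
  have d0: "d > 0" unfolding d_def using assms(1,2) e(1) by auto
  have dle: "d \<le> e x" if "x \<in> X" for x unfolding d_def using assms(1) that by auto
  obtain C where C: "C \<subseteq> Y" "finite C" "Y \<subseteq> (\<Union>c\<in>C. ball c d)"
    using compactE_image[OF assms(3), of Y "\<lambda>c. ball c d"] d0 by force
  obtain cs where cs: "set cs = C" using C(2) finite_list by blast
  define n where "n = length cs"
  define f2 where "f2 = (\<lambda>y. (LEAST i. i = length cs \<or> y \<in> ball (cs!i) d))"
  have f2m: "f2 \<in> restrict_space borel Y \<rightarrow>\<^sub>M count_space {..n}"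
    unfolding f2_def n_def by (rule f2_meas)
  have f2Y: "f2 y < n \<and> y \<in> ball (cs ! f2 y) d" if "y \<in> Y" for y
  proof -
    from that C(3) cs obtain c where "c \<in> set cs" "y \<in> ball c d" by blast
    then obtain i where i: "i < n" "y \<in> ball (cs!i) d"
      by (auto simp: in_set_conv_nth n_def)
    let ?P = "\<lambda>i. i = length cs \<or> y \<in> ball (cs!i) d"
    have "f2 y \<le> i" unfolding f2_def using i by (intro Least_le) simp
    moreover have "?P (f2 y)" unfolding f2_def by (rule LeastI[of _ i]) (use i in simp)
    ultimately show ?thesis using i by (auto simp: n_def)
  qed
  obtain f1 where f1: "bij_betw f1 X {..<card X}"
    using assms(1) by (metis ex_bij_betw_finite_nat lessThan_atLeast0)
  define w where "w = (\<lambda>i j. u (inv_into X f1 i) (cs ! j))"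
  define uh where "uh = (\<lambda>x y. w (f1 x) (f2 y))"
  have approx: "\<bar>u x y - uh x y\<bar> \<le> \<alpha>" if "x \<in> X" "y \<in> Y" for x y
  proof -
    have inv: "inv_into X f1 (f1 x) = x" using f1 that(1) by (simp add: bij_betw_def)
    have m: "cs ! f2 y \<in> Y" using f2Y[OF that(2)] cs C(1) by (auto simp: n_def)
    have "dist (cs ! f2 y) y < e x" using f2Y[OF that(2)] dle[OF that(1)] by (auto simp: dist_commute)
    then have "dist (u x (cs ! f2 y)) (u x y) < \<alpha>" using e(2) that m by blast
    then show ?thesis unfolding uh_def w_def inv by (simp add: dist_real_def)
  qed
  show ?thesis
  proof (intro exI conjI)
    show "(\<lambda>(x, y). uh x y) \<in> borel_measurable (count_space X \<Otimes>\<^sub>M restrict_space borel Y)"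
    proof (rule measurable_pair_measure_countable1)
      show "countable X" using assms(1) by (rule countable_finite)
      fix x assume "x \<in> X"
      have "(\<lambda>j. w (f1 x) j) \<in> count_space {..n} \<rightarrow>\<^sub>M borel" by simp
      from measurable_comp[OF f2m this]
      show "(\<lambda>y. case (x, y) of (x, y) \<Rightarrow> uh x y) \<in> borel_measurable (restrict_space borel Y)"
        by (simp add: uh_def o_def)
    qed
    show "\<forall>x\<in>X. \<forall>y\<in>Y. \<bar>uh x y\<bar> \<le> (\<Sum>p\<in>{..<card X} \<times> {..n}. \<bar>w (fst p) (snd p)\<bar>)"
    proof (intro ballI)
      fix x y assume xy: "x \<in> X" "y \<in> Y"
      have "(f1 x, f2 y) \<in> {..<card X} \<times> {..n}"
        using f1 xy f2Y[OF xy(2)] by (auto simp: bij_betw_def)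
      then show "\<bar>uh x y\<bar> \<le> (\<Sum>p\<in>{..<card X} \<times> {..n}. \<bar>w (fst p) (snd p)\<bar>)"
        unfolding uh_def
        using member_le_sum[of "(f1 x, f2 y)" "{..<card X} \<times> {..n}" "\<lambda>p. \<bar>w (fst p) (snd p)\<bar>"] by auto
    qed
    show "essentially_finite (count_space X) (restrict_space borel Y) uh"
      unfolding essentially_finite_def
    proof (intro exI conjI)
      show "f1 \<in> count_space X \<rightarrow>\<^sub>M count_space {..<card X}"
        using f1 by (auto simp: bij_betw_def)
      show "f2 \<in> restrict_space borel Y \<rightarrow>\<^sub>M count_space {..n}" by (rule f2m)
      show "\<forall>x\<in>space (count_space X). \<forall>y\<in>space (restrict_space borel Y). uh x y = w (f1 x) (f2 y)"
        by (simp add: uh_def)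
    qed auto
    show "alpha_approximation \<alpha> X Y uh u"
      unfolding alpha_approximation_def using approx by blast
  qed
qed

end
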